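(* Let $\widehat{\mathbf M}=(\hat{\mathbb X},\hat{\mathbb U},\mathbb Y,\hat x_0,\hat{\mathbf t},\hat h)$ be a gMDP, $\psi$ an scLTL formula with DFA $\mathcal A_\psi=(Q,q_0,\Sigma,F,\tau)$, $\delta\ge0$, $\mu$ a stationary Markov policy on $\widehat{\mathbf M}\otimes\mathcal A_\psi$, and $\hat{\mathbf C}$ the control strategy for $\widehat{\mathbf M}$ corresponding to $\mu$, so that $\mathbb P_{\hat{\mathbf C}\times\widehat{\mathbf M}}(\boldsymbol\omega\models\psi)$ equals the probability that executions of the product under $\mu$ from its initial state reach $\hat{\mathbb X}\times F$. Then $$\mathbb P_{\hat{\mathbf C}\times\widehat{\mathbf M}}(\boldsymbol\omega\models\psi)\ \ge\ \mathcal S^\mu_\delta\ \ge\ \mathbb P_{\hat{\mathbf C}\times\widehat{\mathbf M}}(\boldsymbol\omega\models\psi)-\delta\,h(\hat{\mathbb X}\times F),$$ where $\mathcal S^\mu_\delta:=\max\{\mathbf 1_F(\bar q_0),V^\mu_\infty(\hat x_0,\bar q_0)\}$ with $\bar q_0=\tau(q_0,\mathsf L(\hat h(\hat x_0)))$, $V^\mu_\infty=\lim_{l\to\infty}(\mathbf T^\mu_\delta)^l(0)$, and $h(\hat{\mathbb X}\times F)$ is the mean hitting time of $\hat{\mathbb X}\times F$ from the initial state of the product.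
   Context: A gMDP $\widehat{\mathbf M}=(\hat{\mathbb X},\hat{\mathbb U},\mathbb Y,\hat x_0,\hat{\mathbf t},\hat h)$: Polish state/input spaces, metric output space $\mathbb Y$, initial state $\hat x_0$, kernel $\hat{\mathbf t}(\cdot\mid\hat x,\hat u)$, measurable output map $\hat h$; output trace $y_t=\hat h(\hat x_t)$. A control strategy is a gMDP reading the state and outputting a distribution over inputs; $\mathbb P_{\hat{\mathbf C}\times\widehat{\mathbf M}}$ is the induced measure on output traces. $\Sigma=2^{\mathsf{AP}}$, $\mathsf L:\mathbb Y\to\Sigma$ measurable labelling, word $\boldsymbol\omega=\mathsf L(y_0)\mathsf L(y_1)\cdots$; $\psi$ scLTL, $\mathcal A_\psi$ a DFA (accepting set $F$, transition $\tau$) accepting exactly the words satisfying $\psi$. Product $\widehat{\mathbf M}\otimes\mathcal A_\psi$: states $\hat{\mathbb X}\times Q$, inputs $\hat{\mathbb U}$, initial state $(\hat x_0,\bar q_0)$, kernel $\bar{\mathbf t}(d\hat x'\times\{q'\}\mid\hat x,q,u)=\mathbf 1_{\{q'\}}(\tau(q,\mathsf L(\hat h(\hat x'))))\hat{\mathbf t}(d\hat x'\mid\hat x,u)$. Stationary Markov policy: universally measurable $\mu:\hat{\mathbb X}\times Q\to\mathcal P(\hat{\mathbb U})$. $\mathbf T^\mu(V)(\hat x,q)=\int\max\{\mathbf 1_F(q'),V(\hat x',q')\}\bar{\mathbf t}(d\hat x'\times\{q'\}\mid\hat x,q,\mu(\hat x,q))$, $\mathbf T^\mu_\delta(V)=\mathbf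 L(\mathbf T^\mu(V)-\delta)$ with $\mathbf L(r)=\min(1,\max(0,r))$. For $A\subseteq\hat{\mathbb X}\times Q$, $H_A(\hat x,q)=\inf\{t\in\mathbb N\cup\{\infty\}:(\hat x_t,q_t)\in A\}$ on executions of the product under $\mu$ started at $(\hat x,q)$, and the mean hitting time is $h(A)=\mathbb E[H_A]=\sum_{n\ge1}\mathbb P(H_A\ge n)$ evaluated from the product's initial state (possibly $+\infty$). *)

theory Defs
  imports "HOL-Probability.Probability"
begin

definition prod_step ::
  "('x \<Rightarrow> 'u \<Rightarrow> 'x measure) \<Rightarrow> ('x \<Rightarrow> 'y) \<Rightarrow> ('y \<Rightarrow> 'ap set) \<Rightarrow> ('q \<Rightarrow> 'ap set \<Rightarrow> 'q)
   \<Rightarrow> ('x \<times> 'q \<Rightarrow> 'u measure) \<Rightarrow> ('x \<times> 'q \<Rightarrow> ennreal) \<Rightarrow> 'x \<times> 'q \<Rightarrow> ennreal" where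
  "prod_step t h L \<tau> \<mu> f s =
     (\<integral>\<^sup>+ u. (\<integral>\<^sup>+ x'. f (x', \<tau> (snd s) (L (h x'))) \<partial>(t (fst s) u)) \<partial>(\<mu> s))"

definition T_mu ::
  "('x \<Rightarrow> 'u \<Rightarrow> 'x measure) \<Rightarrow> ('x \<Rightarrow> 'y) \<Rightarrow> ('y \<Rightarrow> 'ap set) \<Rightarrow> ('q \<Rightarrow> 'ap set \<Rightarrow> 'q)
   \<Rightarrow> 'q set \<Rightarrow> ('x \<times> 'q \<Rightarrow> 'u measure) \<Rightarrow> ('x \<times> 'q \<Rightarrow> real) \<Rightarrow> 'x \<times> 'q \<Rightarrow> real" where
  "T_mu t h L \<tau> F \<mu> V s =
     enn2real (prod_step t h L \<tau> \<mu> (\<lambda>s'. ennreal (max (indicator F (snd s')) (V s'))) s)"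

definition clip01 :: "real \<Rightarrow> real" where
  "clip01 r = min 1 (max 0 r)"

definition T_mu_delta ::
  "('x \<Rightarrow> 'u \<Rightarrow> 'x measure) \<Rightarrow> ('x \<Rightarrow> 'y) \<Rightarrow> ('y \<Rightarrow> 'ap set) \<Rightarrow> ('q \<Rightarrow> 'ap set \<Rightarrow> 'q)
   \<Rightarrow> 'q set \<Rightarrow> ('x \<times> 'q \<Rightarrow> 'u measure) \<Rightarrow> real \<Rightarrow> ('x \<times> 'q \<Rightarrow> real) \<Rightarrow> 'x \<times> 'q \<Rightarrow> real" where
  "T_mu_delta t h L \<tau> F \<mu> \<delta> V s = clip01 (T_mu t h L \<tau> F \<mu> V s - \<delta>)"

definition V_inf ::
  "('x \<Rightarrow> 'u \<Rightarrow> 'x measure) \<Rightarrow> ('x \<Rightarrow> 'y) \<Rightarrow> ('y \<Rightarrow> 'ap set) \<Rightarrow> ('q \<Rightarrow> 'ap set \<Rightarrow> 'q)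
   \<Rightarrow> 'q set \<Rightarrow> ('x \<times> 'q \<Rightarrow> 'u measure) \<Rightarrow> real \<Rightarrow> 'x \<times> 'q \<Rightarrow> real" where
  "V_inf t h L \<tau> F \<mu> \<delta> s = lim (\<lambda>l. ((T_mu_delta t h L \<tau> F \<mu> \<delta>) ^^ l) (\<lambda>_. 0) s)"

text \<open>Law of the hitting time H_A of a Markov chain with one-step expectation operator K:
  hit_le K A n s = P_s(H_A \<le> n), defined by the usual first-step recursion.\<close>
primrec hit_le :: "(('s \<Rightarrow> ennreal) \<Rightarrow> 's \<Rightarrow> ennreal) \<Rightarrow> 's set \<Rightarrow> nat \<Rightarrow> 's \<Rightarrow> ennreal" where
  "hit_le K A 0 s = indicator A s"
| "hit_le K A (Suc n) s = (if s \<in> A then 1 else K (hit_le K A n) s)"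

definition reach_prob :: "(('s \<Rightarrow> ennreal) \<Rightarrow> 's \<Rightarrow> ennreal) \<Rightarrow> 's set \<Rightarrow> 's \<Rightarrow> ennreal" where
  "reach_prob K A s = (SUP n. hit_le K A n s)"

text \<open>Mean hitting time E_s[H_A] = sum_{n>=1} P_s(H_A >= n) = sum_{n>=0} (1 - P_s(H_A <= n)),
  possibly infinite.\<close>
definition mean_hit :: "(('s \<Rightarrow> ennreal) \<Rightarrow> 's \<Rightarrow> ennreal) \<Rightarrow> 's set \<Rightarrow> 's \<Rightarrow> ennreal" where
  "mean_hit K A s = (\<Sum>n. 1 - hit_le K A n s)"

definition univ_measurable :: "('x::topological_space \<times> 'q \<Rightarrow> 'b) \<Rightarrow> 'b measure \<Rightarrow> bool" where
  "univ_measurable f M \<longleftrightarrow>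
     (\<forall>P. prob_space P \<and> sets P = sets (borel \<Otimes>\<^sub>M count_space UNIV) \<longrightarrow>
          f \<in> measurable (completion P) M)"

end

theory Submission
  imports Defs
begin

definition UMX :: "('x::topological_space \<Rightarrow> ennreal) \<Rightarrow> bool" where
  "UMX g \<longleftrightarrow> (\<forall>P. prob_space P \<and> sets P = sets (borel::'x measure) \<longrightarrow> g \<in> borel_measurable (completion P))"

lemma core:
  fixes t :: "'x::polish_space \<Rightarrow> 'u::polish_space \<Rightarrow> 'x measure" and g :: "'x \<Rightarrow> ennreal"
    and \<kappa> :: "'z \<Rightarrow> 'u measure"
  assumes kernel: "case_prod t \<in> borel \<Otimes>\<^sub>M borel \<rightarrow>\<^sub>M prob_algebra borel"
    and UM: "UMX g" and M: "prob_space M"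
    and \<xi>: "\<xi> \<in> M \<rightarrow>\<^sub>M borel" and \<kappa>: "\<kappa> \<in> M \<rightarrow>\<^sub>M prob_algebra borel"
  shows "\<exists>g1 \<in> borel_measurable borel. AE z in M. AE u in \<kappa> z. AE x' in t (\<xi> z) u. g x' = g1 x'"
proof -
  have pm: "(\<lambda>(z,u). (\<xi> z, u)) \<in> M \<Otimes>\<^sub>M borel \<rightarrow>\<^sub>M (borel::'x measure) \<Otimes>\<^sub>M (borel::'u measure)"
    using \<xi> by measurable
  have tk: "(\<lambda>(z,u). t (\<xi> z) u) \<in> M \<Otimes>\<^sub>M borel \<rightarrow>\<^sub>M prob_algebra borel"
    using measurable_compose[OF pm kernel] by (simp add: case_prod_beta)
  define \<rho> where "\<rho> z = \<kappa> z \<bind> t (\<xi> z)" for z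
  have \<rho>: "\<rho> \<in> M \<rightarrow>\<^sub>M prob_algebra borel"
    unfolding \<rho>_def by (rule measurable_bind_prob_space2[OF \<kappa> tk])
  have \<rho>s: "\<rho> \<in> M \<rightarrow>\<^sub>M subprob_algebra borel" using \<rho> by (rule measurable_prob_algebraD)
  define \<nu> where "\<nu> = M \<bind> \<rho>"
  have ne: "space M \<noteq> {}" using M prob_space.not_empty by blast
  have sets\<nu>: "sets \<nu> = sets borel"
    unfolding \<nu>_def by (rule sets_bind[OF _ ne]) (rule sets_kernel[OF \<rho>s])
  have ps\<nu>: "prob_space \<nu>"
    unfolding \<nu>_def
  proof (rule prob_space.prob_space_bind[OF M _ \<rho>s])
    show "AE x in M. prob_space (\<rho> x)"
      using measurable_space[OF \<rho>] by (auto simp: space_prob_algebra)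
  qed
  have "g \<in> borel_measurable (completion \<nu>)" using UM ps\<nu> sets\<nu> by (auto simp: UMX_def)
  from completion_ex_borel_measurable[OF this] obtain g1 where
    g1: "g1 \<in> borel_measurable \<nu>" and ae: "AE x in \<nu>. g x = g1 x" by blast
  obtain N where N: "{x\<in>space \<nu>. \<not> g x = g1 x} \<subseteq> N" "N \<in> null_sets \<nu>" by (rule AE_E[OF ae]) (rule that, assumption, rule null_setsI)
  have NB: "N \<in> sets borel" using N(2) sets\<nu> by auto
  have "AE x in \<nu>. x \<notin> N" using N(2) by (rule AE_not_in)
  then have "AE z in M. AE y in \<rho> z. y \<notin> N"
    unfolding \<nu>_def using NB by (subst (asm) AE_bind[OF \<rho>s]) auto
  then have "AE z in M. AE u in \<kappa> z. AE y in t (\<xi> z) u. y \<notin> N"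
    using AE_space
  proof eventually_elim
    case (elim z)
    have kz: "\<kappa> z \<in> space (prob_algebra borel)" using measurable_space[OF \<kappa> elim(2)] .
    have tz: "t (\<xi> z) \<in> \<kappa> z \<rightarrow>\<^sub>M subprob_algebra borel"
    proof -
      have "(\<lambda>u. (\<xi> z, u)) \<in> borel \<rightarrow>\<^sub>M (borel::'x measure) \<Otimes>\<^sub>M (borel::'u measure)" by measurable
      from measurable_compose[OF this kernel] have "t (\<xi> z) \<in> borel \<rightarrow>\<^sub>M prob_algebra borel" by simp
      then have "t (\<xi> z) \<in> borel \<rightarrow>\<^sub>M subprob_algebra borel" by (rule measurable_prob_algebraD)
      then show ?thesis using kz by (subst measurable_cong_sets[of _ borel]) (auto simp: space_prob_algebra)
    qed
    show ?case using elim(1) NB unfolding \<rho>_def by (subst (asm) AE_bind[OF tz]) auto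
  qed
  then have "AE z in M. AE u in \<kappa> z. AE x' in t (\<xi> z) u. g x' = g1 x'"
  proof -
    have imp: "\<And>y. y \<notin> N \<Longrightarrow> g y = g1 y"
      using N(1) sets_eq_imp_space_eq[OF sets\<nu>] by auto
    show ?thesis using \<open>AE z in M. AE u in \<kappa> z. AE y in t (\<xi> z) u. y \<notin> N\<close>
      by (rule eventually_mono) (erule eventually_mono, erule eventually_mono, erule imp)
  qed
  moreover have "g1 \<in> borel_measurable borel" using g1 sets\<nu> by (simp cong: measurable_cong_sets)
  ultimately show ?thesis by blast
qed

lemma meas_completion_AE:
  fixes f g :: "'a \<Rightarrow> ennreal"
  assumes ae: "AE x in completion M. f x = g x" and g: "g \<in> borel_measurable (completion M)"
  shows "f \<in> borel_measurable (completion M)"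
proof (rule measurableI)
  fix A :: "ennreal set" assume A: "A \<in> sets borel"
  have gA: "g -` A \<inter> space (completion M) \<in> sets (completion M)" using g A by (rule measurable_sets)
  have ae2: "AE x in completion M. x \<in> g -` A \<inter> space (completion M) \<longleftrightarrow> x \<in> f -` A \<inter> space (completion M)"
    using ae AE_space by eventually_elim auto
  show "f -` A \<inter> space (completion M) \<in> sets (completion M)"
    by (rule completion.in_sets_AE[OF ae2 gA]) auto
qed auto

locale setting =
  fixes t :: "'x::polish_space \<Rightarrow> 'u::polish_space \<Rightarrow> 'x measure"
    and h :: "'x \<Rightarrow> 'y::metric_space"
    and L :: "'y \<Rightarrow> 'ap::finite set"
    and \<tau> :: "'q::finite \<Rightarrow> 'ap set \<Rightarrow> 'q"
    and \<mu> :: "'x \<times> 'q \<Rightarrow> 'u measure"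
  assumes kernel: "case_prod t \<in> measurable (borel \<Otimes>\<^sub>M borel) (prob_algebra borel)"
    and h_meas: "h \<in> borel_measurable borel"
    and L_meas: "L \<in> measurable borel (count_space UNIV)"
    and policy: "univ_measurable \<mu> (prob_algebra borel)"
begin

abbreviation K where "K \<equiv> prod_step t h L \<tau> \<mu>"

definition C :: "('x \<times> 'q \<Rightarrow> ennreal) \<Rightarrow> bool" where
  "C f \<longleftrightarrow> (\<forall>q. UMX (\<lambda>x. f (x, q)))"

lemma mu_space: "\<mu> s \<in> space (prob_algebra borel)"
proof -
  let ?P = "return (borel \<Otimes>\<^sub>M count_space UNIV) s"
  have "prob_space ?P" by (rule prob_space_return) (simp add: space_pair_measure)
  moreover have "sets ?P = sets (borel \<Otimes>\<^sub>M count_space UNIV)" by simp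
  ultimately have "\<mu> \<in> completion ?P \<rightarrow>\<^sub>M prob_algebra borel"
    using policy unfolding univ_measurable_def by blast
  from measurable_space[OF this, of s] show ?thesis by (simp add: space_pair_measure)
qed

lemma t_space: "t x u \<in> space (prob_algebra borel)"
  using measurable_space[OF kernel, of "(x,u)"] by (simp add: space_pair_measure)

lemma t_meas: "t x \<in> borel \<rightarrow>\<^sub>M prob_algebra borel"
proof -
  have "(\<lambda>u. (x, u)) \<in> borel \<rightarrow>\<^sub>M (borel::'x measure) \<Otimes>\<^sub>M (borel::'u measure)" by measurable
  from measurable_compose[OF this kernel] show ?thesis by simp
qed

lemma mu_q:
  assumes P: "prob_space P" "sets P = sets (borel::'x measure)"
  shows "(\<lambda>x. \<mu> (x, q)) \<in> completion P \<rightarrow>\<^sub>M prob_algebra borel"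
proof -
  let ?f = "\<lambda>x::'x. (x, q)"
  have f0: "?f \<in> borel \<rightarrow>\<^sub>M borel \<Otimes>\<^sub>M count_space UNIV" by measurable
  have f: "?f \<in> P \<rightarrow>\<^sub>M borel \<Otimes>\<^sub>M count_space UNIV"
    using f0 P(2) by (simp cong: measurable_cong_sets)
  define P' where "P' = distr P (borel \<Otimes>\<^sub>M count_space UNIV) ?f"
  have "prob_space P'" unfolding P'_def by (rule prob_space.prob_space_distr[OF P(1) f])
  moreover have "sets P' = sets (borel \<Otimes>\<^sub>M count_space UNIV)" unfolding P'_def by simp
  ultimately have mu: "\<mu> \<in> completion P' \<rightarrow>\<^sub>M prob_algebra borel"
    using policy unfolding univ_measurable_def by blast
  have sP': "sets P' = sets (borel \<Otimes>\<^sub>M count_space UNIV)" unfolding P'_def by simp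
  have f': "?f \<in> P \<rightarrow>\<^sub>M P'" using f by (subst measurable_cong_sets[OF refl sP'])
  have "?f \<in> completion P \<rightarrow>\<^sub>M completion P'"
  proof (rule completion.measurable_completion2)
    show "?f \<in> completion P \<rightarrow>\<^sub>M P'" using f' by (rule measurable_completion)
    show "null_sets P' \<subseteq> null_sets (distr (completion P) P' ?f)"
    proof
      fix A assume A: "A \<in> null_sets P'"
      then have As: "A \<in> sets P'" and A0: "emeasure P' A = 0" by auto
      have As2: "A \<in> sets (borel \<Otimes>\<^sub>M count_space UNIV)" using As sP' by simp
      have "emeasure P' A = emeasure P (?f -` A \<inter> space P)"
        unfolding P'_def by (rule emeasure_distr[OF f As2])
      moreover have "emeasure (distr P P' ?f) A = emeasure P (?f -` A \<inter> space P)"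
        by (rule emeasure_distr[OF f' As])
      ultimately show "A \<in> null_sets (distr (completion P) P' ?f)"
        unfolding distr_completion[OF f'] using A0 As by (intro null_setsI) auto
    qed
  qed
  from measurable_compose[OF this mu] show ?thesis by simp
qed

lemma C_g:
  assumes "C f"
  shows "UMX (\<lambda>x'. f (x', \<tau> q (L (h x'))))"
  unfolding UMX_def
proof safe
  fix P :: "'x measure" assume P: "prob_space P" "sets P = sets borel"
  have "(\<lambda>x'. L (h x')) \<in> borel \<rightarrow>\<^sub>M count_space UNIV"
    using measurable_compose[OF h_meas L_meas] by simp
  then have "(\<lambda>x'. \<tau> q (L (h x'))) \<in> borel \<rightarrow>\<^sub>M count_space UNIV"
    by (rule measurable_compose) (rule measurable_count_space)
  then have "(\<lambda>x'. \<tau> q (L (h x'))) \<in> P \<rightarrow>\<^sub>M count_space UNIV"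
    by (subst measurable_cong_sets[OF P(2) refl])
  then have "(\<lambda>x'. \<tau> q (L (h x'))) \<in> completion P \<rightarrow>\<^sub>M count_space UNIV"
    by (rule measurable_completion)
  moreover have "\<And>i. (\<lambda>x. f (x, i)) \<in> borel_measurable (completion P)"
    using assms P unfolding C_def UMX_def by simp
  ultimately show "(\<lambda>x'. f (x', \<tau> q (L (h x')))) \<in> borel_measurable (completion P)"
    using measurable_compose_countable[where f="\<lambda>i x. f (x, i)" and g="\<lambda>x'. \<tau> q (L (h x'))"] by blast
qed

lemma K_eq: "K f s = (\<integral>\<^sup>+u. \<integral>\<^sup>+x'. f (x', \<tau> (snd s) (L (h x'))) \<partial>t (fst s) u \<partial>\<mu> s)"
  by (simp add: prod_step_def)

lemma K_mono: "(\<And>s. f s \<le> g s) \<Longrightarrow> K f s \<le> K g s"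
  unfolding K_eq by (intro nn_integral_mono) auto

lemma ps_t: "prob_space (t x u)" and sets_t: "sets (t x u) = sets borel"
  using t_space[of x u] by (auto simp: space_prob_algebra)

lemma ps_mu: "prob_space (\<mu> s)" and sets_mu: "sets (\<mu> s) = sets borel"
  using mu_space[of s] by (auto simp: space_prob_algebra)

lemma K_const: "K (\<lambda>_. c) s = c"
proof -
  have "\<And>u. (\<integral>\<^sup>+x'. c \<partial>t (fst s) u) = c"
    using prob_space.emeasure_space_1[OF ps_t] by simp
  then show ?thesis unfolding K_eq using prob_space.emeasure_space_1[OF ps_mu] by simp
qed

lemma K_repr:
  assumes "C f"
  shows "\<exists>g1\<in>borel_measurable borel. AE u in \<mu> s. AE x' in t (fst s) u. f (x', \<tau> (snd s) (L (h x'))) = g1 x'"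
proof -
  have M: "prob_space (return (count_space UNIV) s)" by (rule prob_space_return) simp
  have \<xi>: "fst \<in> return (count_space UNIV) s \<rightarrow>\<^sub>M borel" by simp
  have \<kappa>: "\<mu> \<in> return (count_space UNIV) s \<rightarrow>\<^sub>M prob_algebra borel" using mu_space by simp
  from core[OF kernel C_g[OF assms, of "snd s"] M \<xi> \<kappa>] obtain g1 where
    g1: "g1 \<in> borel_measurable borel" and
    ae: "AE z in return (count_space UNIV) s. AE u in \<mu> z. AE x' in t (fst z) u. f (x', \<tau> (snd s) (L (h x'))) = g1 x'"
    by blast
  have "AE u in \<mu> s. AE x' in t (fst s) u. f (x', \<tau> (snd s) (L (h x'))) = g1 x'"
    using ae by (subst (asm) AE_return) (auto simp: Measurable.pred_def)
  with g1 show ?thesis by blast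
qed

lemma K_via:
  assumes "AE u in \<mu> s. AE x' in t (fst s) u. f (x', \<tau> (snd s) (L (h x'))) = g1 x'"
  shows "K f s = (\<integral>\<^sup>+u. \<integral>\<^sup>+x'. g1 x' \<partial>t (fst s) u \<partial>\<mu> s)"
  unfolding K_eq using assms
  by (intro nn_integral_cong_AE) (elim eventually_mono, rule nn_integral_cong_AE)

lemma meas_t: "g1 \<in> borel_measurable borel \<Longrightarrow> g1 \<in> borel_measurable (t x u)"
  by (subst measurable_cong_sets[OF sets_t refl])

lemma meas_I:
  assumes g1: "g1 \<in> borel_measurable borel"
  shows "(\<lambda>u. \<integral>\<^sup>+x'. g1 x' \<partial>t x u) \<in> borel_measurable (\<mu> s)"
proof -
  have "t x \<in> borel \<rightarrow>\<^sub>M subprob_algebra borel" using t_meas by (rule measurable_prob_algebraD)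
  from measurable_compose[OF this nn_integral_measurable_subprob_algebra[OF g1]]
  show ?thesis by (subst measurable_cong_sets[OF sets_mu refl])
qed

lemma K_add:
  assumes "C f1" "C f2"
  shows "K (\<lambda>s. f1 s + f2 s) s = K f1 s + K f2 s"
proof -
  obtain g1 where g1: "g1 \<in> borel_measurable borel"
    and a1: "AE u in \<mu> s. AE x' in t (fst s) u. f1 (x', \<tau> (snd s) (L (h x'))) = g1 x'"
    using K_repr[OF assms(1)] by blast
  obtain g2 where g2: "g2 \<in> borel_measurable borel"
    and a2: "AE u in \<mu> s. AE x' in t (fst s) u. f2 (x', \<tau> (snd s) (L (h x'))) = g2 x'"
    using K_repr[OF assms(2)] by blast
  have a3: "AE u in \<mu> s. AE x' in t (fst s) u. f1 (x', \<tau> (snd s) (L (h x'))) + f2 (x', \<tau> (snd s) (L (h x'))) = g1 x' + g2 x'"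
    using a1 a2 by eventually_elim (auto elim: eventually_elim2)
  have "K (\<lambda>s. f1 s + f2 s) s = (\<integral>\<^sup>+u. \<integral>\<^sup>+x'. g1 x' + g2 x' \<partial>t (fst s) u \<partial>\<mu> s)"
    using K_via[OF a3] by simp
  also have "\<dots> = (\<integral>\<^sup>+u. (\<integral>\<^sup>+x'. g1 x' \<partial>t (fst s) u) + (\<integral>\<^sup>+x'. g2 x' \<partial>t (fst s) u) \<partial>\<mu> s)"
    by (intro nn_integral_cong nn_integral_add meas_t g1 g2)
  also have "\<dots> = (\<integral>\<^sup>+u. \<integral>\<^sup>+x'. g1 x' \<partial>t (fst s) u \<partial>\<mu> s) + (\<integral>\<^sup>+u. \<integral>\<^sup>+x'. g2 x' \<partial>t (fst s) u \<partial>\<mu> s)"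
    by (intro nn_integral_add meas_I g1 g2)
  also have "\<dots> = K f1 s + K f2 s" using K_via[OF a1] K_via[OF a2] by simp
  finally show ?thesis .
qed

lemma K_cmult:
  assumes "C f"
  shows "K (\<lambda>s. c * f s) s = c * K f s"
proof -
  obtain g1 where g1: "g1 \<in> borel_measurable borel"
    and a1: "AE u in \<mu> s. AE x' in t (fst s) u. f (x', \<tau> (snd s) (L (h x'))) = g1 x'"
    using K_repr[OF assms(1)] by blast
  have a3: "AE u in \<mu> s. AE x' in t (fst s) u. c * f (x', \<tau> (snd s) (L (h x'))) = c * g1 x'"
    using a1 by eventually_elim (auto elim: eventually_mono)
  have "K (\<lambda>s. c * f s) s = (\<integral>\<^sup>+u. \<integral>\<^sup>+x'. c * g1 x' \<partial>t (fst s) u \<partial>\<mu> s)"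
    using K_via[OF a3] by simp
  also have "\<dots> = (\<integral>\<^sup>+u. c * (\<integral>\<^sup>+x'. g1 x' \<partial>t (fst s) u) \<partial>\<mu> s)"
    by (intro nn_integral_cong nn_integral_cmult meas_t g1)
  also have "\<dots> = c * (\<integral>\<^sup>+u. \<integral>\<^sup>+x'. g1 x' \<partial>t (fst s) u \<partial>\<mu> s)"
    by (intro nn_integral_cmult meas_I g1)
  also have "\<dots> = c * K f s" using K_via[OF a1] by simp
  finally show ?thesis .
qed

lemma C_add: "C f1 \<Longrightarrow> C f2 \<Longrightarrow> C (\<lambda>s. f1 s + f2 s)"
  unfolding C_def UMX_def by (auto intro!: borel_measurable_add)

lemma C_cmult: "C f \<Longrightarrow> C (\<lambda>s. c * f s)"
  unfolding C_def UMX_def by (auto intro!: borel_measurable_times_ennreal)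

lemma C_diff: "C f1 \<Longrightarrow> C f2 \<Longrightarrow> C (\<lambda>s. f1 s - f2 s)"
  unfolding C_def UMX_def by (auto intro!: borel_measurable_minus_ennreal)

lemma C_const: "C (\<lambda>_. c)"
  unfolding C_def UMX_def by auto

lemma C_sum: "(\<And>i. i \<in> I \<Longrightarrow> C (f i)) \<Longrightarrow> C (\<lambda>s. \<Sum>i\<in>I. f i s)"
  unfolding C_def UMX_def by (auto intro!: borel_measurable_sum)

lemma K_sum:
  assumes "finite I" "\<And>i. i \<in> I \<Longrightarrow> C (f i)"
  shows "K (\<lambda>s. \<Sum>i\<in>I. f i s) s = (\<Sum>i\<in>I. K (f i) s)"
  using assms
proof (induction I rule: finite_induct)
  case empty
  then show ?case using K_const[of 0] by simp
next
  case (insert i I)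
  have "K (\<lambda>s. \<Sum>i\<in>insert i I. f i s) s = K (\<lambda>s. f i s + (\<Sum>i\<in>I. f i s)) s"
    using insert.hyps by simp
  also have "\<dots> = K (f i) s + K (\<lambda>s. \<Sum>i\<in>I. f i s) s"
    using insert.prems by (intro K_add C_sum) auto
  finally show ?case using insert by simp
qed

lemma C_K:
  assumes "C f"
  shows "C (K f)"
  unfolding C_def UMX_def
proof (intro allI impI, elim conjE)
  fix q and P :: "'x measure" assume P: "prob_space P" "sets P = sets borel"
  have M: "prob_space (completion P)" using P(1) by (rule prob_space.prob_space_completion)
  have \<xi>0: "(\<lambda>x. x) \<in> P \<rightarrow>\<^sub>M borel"
    by (subst measurable_cong_sets[OF P(2) refl]) simp
  have \<xi>: "(\<lambda>x. x) \<in> completion P \<rightarrow>\<^sub>M borel" using \<xi>0 by (rule measurable_completion)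
  have \<kappa>: "(\<lambda>x. \<mu> (x, q)) \<in> completion P \<rightarrow>\<^sub>M prob_algebra borel" by (rule mu_q[OF P])
  from core[OF kernel C_g[OF assms, of q] M \<xi> \<kappa>] obtain g1 where
    g1: "g1 \<in> borel_measurable borel" and
    ae: "AE x in completion P. AE u in \<mu> (x, q). AE x' in t x u. f (x', \<tau> q (L (h x'))) = g1 x'"
    by blast
  have ae2: "AE x in completion P. K f (x, q) = (\<integral>\<^sup>+u. \<integral>\<^sup>+x'. g1 x' \<partial>t x u \<partial>\<mu> (x, q))"
    using ae
  proof (rule eventually_mono)
    fix x assume "AE u in \<mu> (x, q). AE x' in t x u. f (x', \<tau> q (L (h x'))) = g1 x'"
    then show "K f (x, q) = (\<integral>\<^sup>+u. \<integral>\<^sup>+x'. g1 x' \<partial>t x u \<partial>\<mu> (x, q))"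
      using K_via[of f "(x, q)" g1, unfolded fst_conv snd_conv] by blast
  qed
  have id2: "(\<lambda>p. (fst p, snd p)) \<in> completion P \<Otimes>\<^sub>M borel \<rightarrow>\<^sub>M (borel::'x measure) \<Otimes>\<^sub>M (borel::'u measure)"
    by (rule measurable_Pair[OF measurable_compose[OF measurable_fst \<xi>] measurable_snd])
  have tk: "case_prod t \<in> completion P \<Otimes>\<^sub>M borel \<rightarrow>\<^sub>M subprob_algebra borel"
    using measurable_compose[OF id2 measurable_prob_algebraD[OF kernel]] by simp
  have inner: "(\<lambda>(x, u). \<integral>\<^sup>+x'. g1 x' \<partial>t x u) \<in> borel_measurable (completion P \<Otimes>\<^sub>M borel)"
    using measurable_compose[OF tk nn_integral_measurable_subprob_algebra[OF g1]]
    by (simp add: case_prod_beta')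
  have "(\<lambda>x. \<integral>\<^sup>+u. \<integral>\<^sup>+x'. g1 x' \<partial>t x u \<partial>\<mu> (x, q)) \<in> borel_measurable (completion P)"
    using nn_integral_measurable_subprob_algebra2[OF inner measurable_prob_algebraD[OF \<kappa>]] .
  then show "(\<lambda>x. K f (x, q)) \<in> borel_measurable (completion P)"
    by (rule meas_completion_AE[OF ae2])
qed

lemma C_hit: "C (hit_le K (UNIV \<times> F) n)"
proof (induction n)
  case 0
  have "C (\<lambda>s. indicator F (snd s))"
    unfolding C_def UMX_def by auto
  moreover have "hit_le K (UNIV \<times> F) 0 = (\<lambda>s. indicator F (snd s))"
    by (auto simp: indicator_def fun_eq_iff)
  ultimately show ?case by simp
next
  case (Suc n)
  have K: "C (K (hit_le K (UNIV \<times> F) n))" by (rule C_K[OF Suc])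
  show ?case
    unfolding C_def
  proof
    fix q
    show "UMX (\<lambda>x. hit_le K (UNIV \<times> F) (Suc n) (x, q))"
    proof (cases "q \<in> F")
      case True
      then show ?thesis by (simp add: UMX_def)
    next
      case False
      then show ?thesis using K by (simp add: C_def)
    qed
  qed
qed

lemma K_le1: "(\<And>s. f s \<le> 1) \<Longrightarrow> K f s \<le> 1"
  using K_mono[of f "\<lambda>_. 1" s] K_const[of 1 s] by simp

context
  fixes F :: "'q set" and \<delta> :: real
  assumes delta: "\<delta> \<ge> 0"
begin

abbreviation Vl :: "nat \<Rightarrow> 'x \<times> 'q \<Rightarrow> real" where
  "Vl l \<equiv> ((T_mu_delta t h L \<tau> F \<mu> \<delta>) ^^ l) (\<lambda>_. 0)"
abbreviation W :: "nat \<Rightarrow> 'x \<times> 'q \<Rightarrow> ennreal" where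
  "W l \<equiv> (\<lambda>s. ennreal (max (indicator F (snd s)) (Vl l s)))"
abbreviation hit :: "nat \<Rightarrow> 'x \<times> 'q \<Rightarrow> ennreal" where
  "hit \<equiv> hit_le K (UNIV \<times> F)"
abbreviation D :: "nat \<Rightarrow> 'x \<times> 'q \<Rightarrow> ennreal" where
  "D l \<equiv> (\<lambda>s. \<Sum>m<l. (1 - hit m s))"

lemma Vl_Suc: "Vl (Suc l) s = clip01 (enn2real (K (W l) s) - \<delta>)"
  by (simp add: T_mu_delta_def T_mu_def)

lemma clip01_bounds: "0 \<le> clip01 r" "clip01 r \<le> 1"
  by (auto simp: clip01_def)

lemma Vl_bounds': "0 \<le> Vl l s \<and> Vl l s \<le> 1"
proof (cases l)
  case 0 then show ?thesis by simp
next
  case (Suc m)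
  show ?thesis unfolding Suc Vl_Suc using clip01_bounds by blast
qed

lemma Vl_bounds: "0 \<le> Vl l s" "Vl l s \<le> 1"
  using Vl_bounds' by auto

lemma W_le1: "W l s \<le> 1"
proof -
  have "max (indicator F (snd s)) (Vl l s) \<le> (1::real)"
    using Vl_bounds(2)[of l s] by (simp add: indicator_def)
  then show ?thesis by (simp only: ennreal_le_1)
qed

lemma KW_fin: "K (W l) s = ennreal (enn2real (K (W l) s))" "K (W l) s \<le> 1"
proof -
  show le: "K (W l) s \<le> 1" by (rule K_le1) (rule W_le1)
  then have "K (W l) s < top" using ennreal_one_less_top by (rule le_less_trans)
  then show "K (W l) s = ennreal (enn2real (K (W l) s))" by (simp only: less_top ennreal_enn2real_if) simp
qed

lemma hit_le1: "hit l s \<le> 1"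
proof (induction l arbitrary: s)
  case 0 then show ?case by (simp add: indicator_def)
next
  case (Suc l) then show ?case by (simp add: K_le1)
qed

lemma W_le_hit: "W l s \<le> hit l s"
proof (induction l arbitrary: s)
  case 0 then show ?case by (simp add: indicator_def mem_Times_iff)
next
  case (Suc l)
  show ?case
  proof (cases "snd s \<in> F")
    case True
    then have "s \<in> UNIV \<times> F" by (cases s) auto
    then show ?thesis using W_le1[of s "Suc l"] by simp
  next
    case False
    then have nA: "s \<notin> UNIV \<times> F" by (cases s) auto
    define r where "r = enn2real (K (W l) s)"
    have r0: "0 \<le> r" unfolding r_def by simp
    have "Vl (Suc l) s \<le> r" unfolding Vl_Suc r_def[symmetric] using r0 delta by (simp add: clip01_def)
    then have "W (Suc l) s \<le> ennreal r" using False Vl_bounds[of "Suc l" s] by (simp add: ennreal_leI)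
    also have "ennreal r = K (W l) s" unfolding r_def using KW_fin(1) by simp
    also have "\<dots> \<le> K (hit l) s" by (rule K_mono) (rule Suc.IH)
    also have "\<dots> = hit (Suc l) s" using nA by simp
    finally show ?thesis .
  qed
qed

lemma Vl_mono: "Vl l s \<le> Vl (Suc l) s"
proof (induction l arbitrary: s)
  case 0 then show ?case using Vl_bounds[of 1 s] by simp
next
  case (Suc l)
  have "K (W l) s \<le> K (W (Suc l)) s"
    by (rule K_mono, rule ennreal_leI, rule max.mono, rule order.refl, rule Suc.IH)
  then have "enn2real (K (W l) s) \<le> enn2real (K (W (Suc l)) s)"
  proof (rule enn2real_mono)
    show "K (W (Suc l)) s < top"
      using KW_fin(2)[of "Suc l" s] ennreal_one_less_top by (rule le_less_trans)
  qed
  then show ?case unfolding Vl_Suc[of l] Vl_Suc[of "Suc l"] by (auto simp: clip01_def)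
qed

lemma C_D: "C (D l)"
  by (intro C_sum C_diff C_const C_hit)

lemma hit_fin: "hit l s \<noteq> top"
  using hit_le1[of l s] ennreal_one_less_top by (metis le_less_trans less_irrefl)

lemma K_one_minus_hit:
  assumes nA: "s \<notin> UNIV \<times> F"
  shows "K (\<lambda>s'. 1 - hit m s') s = 1 - hit (Suc m) s"
proof -
  have "K (\<lambda>s'. (1 - hit m s') + hit m s') s = K (\<lambda>s'. 1 - hit m s') s + K (hit m) s"
    by (intro K_add C_diff C_const C_hit)
  moreover have "(\<lambda>s'. (1 - hit m s') + hit m s') = (\<lambda>_. 1)"
    using hit_le1[of m] by (simp add: diff_add_cancel_ennreal fun_eq_iff)
  ultimately have "K (\<lambda>s'. 1 - hit m s') s + K (hit m) s = 1" using K_const[of 1 s] by simp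
  moreover have "K (hit m) s = hit (Suc m) s" using nA by simp
  ultimately have "K (\<lambda>s'. 1 - hit m s') s + hit (Suc m) s = 1" by simp
  then have "K (\<lambda>s'. 1 - hit m s') s = 1 - hit (Suc m) s"
    using ennreal_add_diff_cancel_right[OF hit_fin[of "Suc m" s]] by metis
  then show ?thesis .
qed

lemma main_ineq: "hit l s \<le> W l s + ennreal \<delta> * D l s"
proof (induction l arbitrary: s)
  case 0 then show ?case by (simp add: indicator_def mem_Times_iff)
next
  case (Suc l)
  show ?case
  proof (cases "snd s \<in> F")
    case True
    then have "s \<in> UNIV \<times> F" by (cases s) auto
    then have "hit (Suc l) s = 1" by simp
    also have "1 \<le> W (Suc l) s" using True by simp
    also have "W (Suc l) s \<le> W (Suc l) s + ennreal \<delta> * D (Suc l) s" by simp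
    finally show ?thesis .
  next
    case False
    then have nA: "s \<notin> UNIV \<times> F" by (cases s) auto
    define G where "G s' = hit l s' - ennreal \<delta> * D l s'" for s'
    have CG: "C G" unfolding G_def by (intro C_diff C_cmult C_hit C_D)
    have CdD: "C (\<lambda>s'. ennreal \<delta> * D l s')" by (intro C_cmult C_D)
    have G_le: "G s' \<le> W l s'" for s'
      unfolding G_def using Suc.IH[of s'] hit_fin[of l s']
      by (simp add: ennreal_minus_le_iff add.commute)
    have hit_split: "hit l s' \<le> G s' + ennreal \<delta> * D l s'" for s'
      unfolding G_def by (auto simp: diff_add_self_ennreal not_le intro: less_imp_le)
    have step1: "hit (Suc l) s \<le> K G s + ennreal \<delta> * K (D l) s"
    proof -
      have "hit (Suc l) s = K (hit l) s" using nA by simp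
      also have "\<dots> \<le> K (\<lambda>s'. G s' + ennreal \<delta> * D l s') s" by (rule K_mono) (rule hit_split)
      also have "\<dots> = K G s + K (\<lambda>s'. ennreal \<delta> * D l s') s" by (rule K_add[OF CG CdD])
      also have "K (\<lambda>s'. ennreal \<delta> * D l s') s = ennreal \<delta> * K (D l) s" by (rule K_cmult[OF C_D])
      finally show ?thesis .
    qed
    have step2: "K G s \<le> K (W l) s" by (rule K_mono) (rule G_le)
    have step3: "K (D l) s = (\<Sum>m<l. 1 - hit (Suc m) s)"
    proof -
      have "K (D l) s = (\<Sum>m<l. K (\<lambda>s'. 1 - hit m s') s)"
        by (rule K_sum) (auto intro!: C_diff C_const C_hit)
      also have "\<dots> = (\<Sum>m<l. 1 - hit (Suc m) s)"
        by (rule sum.cong[OF refl]) (rule K_one_minus_hit[OF nA])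
      finally show ?thesis .
    qed
    have step4: "K (W l) s \<le> W (Suc l) s + ennreal \<delta>"
    proof -
      define r where "r = enn2real (K (W l) s)"
      have Kr: "K (W l) s = ennreal r" unfolding r_def by (rule KW_fin(1))
      have r0: "0 \<le> r" unfolding r_def by simp
      have "ennreal r \<le> 1" using KW_fin(2)[of l s] Kr by simp
      then have r1: "r \<le> 1" by (simp only: ennreal_le_1)
      have "Vl (Suc l) s = clip01 (r - \<delta>)" unfolding Vl_Suc r_def ..
      also have "\<dots> = max 0 (r - \<delta>)" using r1 delta by (simp add: clip01_def)
      finally have V: "Vl (Suc l) s = max 0 (r - \<delta>)" .
      have "W (Suc l) s = ennreal (max 0 (r - \<delta>))" using False V by simp
      then have "W (Suc l) s + ennreal \<delta> = ennreal (max 0 (r - \<delta>) + \<delta>)"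
        using delta by (simp add: ennreal_plus)
      moreover have "r \<le> max 0 (r - \<delta>) + \<delta>" by simp
      ultimately show ?thesis using Kr by (simp add: ennreal_leI)
    qed
    have step5: "1 + (\<Sum>m<l. 1 - hit (Suc m) s) = D (Suc l) s"
    proof -
      have "hit 0 s = 0" using nA by simp
      then show ?thesis by (simp only: sum.lessThan_Suc_shift) simp
    qed
    have "hit (Suc l) s \<le> K (W l) s + ennreal \<delta> * K (D l) s"
      using step1 step2 by (meson add_right_mono order_trans)
    also have "\<dots> \<le> (W (Suc l) s + ennreal \<delta>) + ennreal \<delta> * K (D l) s"
      using step4 by (rule add_right_mono)
    also have "\<dots> = W (Suc l) s + ennreal \<delta> * (1 + K (D l) s)"
      by (simp add: distrib_left add.assoc)
    also have "1 + K (D l) s = D (Suc l) s" using step3 step5 by simp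
    finally show ?thesis .
  qed
qed

lemma final:
  "enn2real (reach_prob K (UNIV \<times> F) s0) \<ge> max (indicator F (snd s0)) (V_inf t h L \<tau> F \<mu> \<delta> s0) \<and>
   ereal (max (indicator F (snd s0)) (V_inf t h L \<tau> F \<mu> \<delta> s0)) \<ge>
     ereal (enn2real (reach_prob K (UNIV \<times> F) s0)) - ereal \<delta> * enn2ereal (mean_hit K (UNIV \<times> F) s0)"
proof -
  define R where "R = reach_prob K (UNIV \<times> F) s0"
  define M where "M = mean_hit K (UNIV \<times> F) s0"
  define v where "v = (SUP l. Vl l s0)"
  define S where "S = max (indicator F (snd s0)) v"
  define P where "P = enn2real R"
  have inc: "incseq (\<lambda>l. Vl l s0)" by (rule incseq_SucI) (rule Vl_mono)
  have bdd: "bdd_above (range (\<lambda>l. Vl l s0))" using Vl_bounds(2) by (intro bdd_aboveI2) 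
  have lim: "(\<lambda>l. Vl l s0) \<longlonglongrightarrow> v" unfolding v_def by (rule LIMSEQ_incseq_SUP[OF bdd inc])
  have Vinf: "V_inf t h L \<tau> F \<mu> \<delta> s0 = v" unfolding V_inf_def using lim by (rule limI)
  have Vle: "Vl l s0 \<le> v" for l using inc lim by (rule incseq_le)
  have R_def2: "R = (SUP l. hit l s0)" unfolding R_def reach_prob_def ..
  have R1: "R \<le> 1" unfolding R_def2 by (rule SUP_least) (rule hit_le1)
  then have Rfin: "R \<noteq> top" using ennreal_one_less_top by (metis le_less_trans less_irrefl)
  then have RP: "R = ennreal P" unfolding P_def by (simp add: ennreal_enn2real_if)
  have P0: "0 \<le> P" unfolding P_def by simp
  have hitR: "hit l s0 \<le> R" for l unfolding R_def2 by (rule SUP_upper) simp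
  have WP: "max (indicator F (snd s0)) (Vl l s0) \<le> P" for l
  proof -
    have "ennreal (max (indicator F (snd s0)) (Vl l s0)) \<le> ennreal P"
      using W_le_hit[of s0 l] hitR[of l] RP by simp
    then show ?thesis using P0 by simp
  qed
  have "v \<le> P" unfolding v_def using WP by (intro cSUP_least) (auto intro: order_trans[OF max.cobounded2])
  moreover have "indicator F (snd s0) \<le> P" using WP[of 0] by simp
  ultimately have claim1: "S \<le> P" unfolding S_def by simp
  have S0: "0 \<le> S" unfolding S_def by (simp add: max.coboundedI1)
  have M_def2: "M = (SUP l. D l s0)" unfolding M_def mean_hit_def by (rule suminf_eq_SUP)
  have DM: "D l s0 \<le> M" for l unfolding M_def2 by (rule SUP_upper) simp
  have "hit l s0 \<le> ennreal S + ennreal \<delta> * M" for l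
  proof -
    have "hit l s0 \<le> W l s0 + ennreal \<delta> * D l s0" by (rule main_ineq)
    also have "W l s0 \<le> ennreal S" unfolding S_def using Vle[of l] by (intro ennreal_leI max.mono) auto
    also have "ennreal \<delta> * D l s0 \<le> ennreal \<delta> * M" by (intro mult_left_mono DM) simp
    finally show ?thesis by (simp add: add_mono)
  qed
  then have RS: "R \<le> ennreal S + ennreal \<delta> * M" unfolding R_def2 by (intro SUP_least)
  have claim2: "ereal P - ereal \<delta> * enn2ereal M \<le> ereal S"
  proof (cases M)
    case (real m)
    then have m0: "0 \<le> m" by simp
    have a: "ennreal P \<le> ennreal S + ennreal (\<delta> * m)"
      using RS RP real delta m0 by (simp add: ennreal_mult)
    have e: "ennreal (S + \<delta> * m) = ennreal S + ennreal (\<delta> * m)"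
      using S0 delta m0 by (intro ennreal_plus) auto
    have "ennreal P \<le> ennreal (S + \<delta> * m)" using a by (simp only: e)
    then have "P \<le> S + \<delta> * m" using S0 delta m0 by (subst (asm) ennreal_le_iff) auto
    then show ?thesis using real by simp
  next
    case top
    show ?thesis
    proof (cases "\<delta> = 0")
      case True
      then have "ennreal P \<le> ennreal S" using RS RP by simp
      then have "P \<le> S" using S0 by simp
      have z: "ereal \<delta> * enn2ereal M = 0" using True by (simp add: zero_ereal_def[symmetric])
      have "ereal P - 0 \<le> ereal S" using \<open>P \<le> S\<close> by simp
      then show ?thesis by (simp only: z)
    next
      case False
      then have "ereal \<delta> * enn2ereal M = \<infinity>" using top delta by simp
      then show ?thesis by simp
    qed
  qed
  show ?thesis using claim1 claim2 unfolding S_def P_def R_def M_def Vinf by simp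
qed

end

end

theorem corollary2:
  fixes t :: "'x::polish_space \<Rightarrow> 'u::polish_space \<Rightarrow> 'x measure"
    and h :: "'x \<Rightarrow> 'y::metric_space"
    and x0 :: 'x
    and L :: "'y \<Rightarrow> 'ap::finite set"
    and \<tau> :: "'q::finite \<Rightarrow> 'ap set \<Rightarrow> 'q"
    and q0 :: 'q
    and F :: "'q set"
    and \<mu> :: "'x \<times> 'q \<Rightarrow> 'u measure"
    and \<delta> :: real
  assumes kernel: "case_prod t \<in> measurable (borel \<Otimes>\<^sub>M borel) (prob_algebra borel)"
    and h_meas: "h \<in> borel_measurable borel"
    and L_meas: "L \<in> measurable borel (count_space UNIV)"
    and policy: "univ_measurable \<mu> (prob_algebra borel)"
    and delta: "\<delta> \<ge> 0"
  shows
    "let q0' = \<tau> q0 (L (h x0));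
         K = prod_step t h L \<tau> \<mu>;
         A = UNIV \<times> F;
         P = enn2real (reach_prob K A (x0, q0'));
         S = max (indicator F q0') (V_inf t h L \<tau> F \<mu> \<delta> (x0, q0'))
     in P \<ge> S \<and> ereal S \<ge> ereal P - ereal \<delta> * enn2ereal (mean_hit K A (x0, q0'))"
proof -
  interpret setting t h L \<tau> \<mu>
    using kernel h_meas L_meas policy by unfold_locales
  have "enn2real (reach_prob (prod_step t h L \<tau> \<mu>) (UNIV \<times> F) (x0, \<tau> q0 (L (h x0)))) \<ge>
      max (indicator F (snd (x0, \<tau> q0 (L (h x0))))) (V_inf t h L \<tau> F \<mu> \<delta> (x0, \<tau> q0 (L (h x0)))) \<and>
   ereal (max (indicator F (snd (x0, \<tau> q0 (L (h x0))))) (V_inf t h L \<tau> F \<mu> \<delta> (x0, \<tau> q0 (L (h x0))))) \<ge>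
     ereal (enn2real (reach_prob (prod_step t h L \<tau> \<mu>) (UNIV \<times> F) (x0, \<tau> q0 (L (h x0))))) - ereal \<delta> * enn2ereal (mean_hit (prod_step t h L \<tau> \<mu>) (UNIV \<times> F) (x0, \<tau> q0 (L (h x0))))"
    by (rule final[OF delta])
  then show ?thesis unfolding Let_def by simp
qed

end
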